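(* Let $m,n$ be positive integers, $a=\min(m,n)$ and $b=\max(m,n)$. Then $J(\mathbf{P}_{m,n})$, ordered by inclusion, is a distributive lattice of rank $\frac{-a^3+3a^2b+3ab+a}{6}$.
   Context: The poset $\mathbf{P}_{m,n}$ has elements the integer triples $(i,j,k)$ with $0\le k\le m-1$, $k\le j\le n-1$, $k\le i\le m-1$, and partial order generated by the covering relations: $(i,j,k)$ covers each of $(i+1,j,k)$, $(i,j+1,k)$, $(i-1,j,k-1)$, $(i,j-1,k-1)$ that is an element of $\mathbf{P}_{m,n}$. For a poset $P$, $J(P)$ denotes the set of order ideals of $P$ (subsets $X$ with $y\in X,\ z\le y\Rightarrow z\in X$). *)

theory Defs
  imports Main
begin

type_synonym triple = "nat \<times> nat \<times> nat"

definition Pmn :: "nat \<Rightarrow> nat \<Rightarrow> triple set" where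
  "Pmn m n = {(i,j,k). k \<le> m - 1 \<and> k \<le> j \<and> j \<le> n - 1 \<and> k \<le> i \<and> i \<le> m - 1}"

text \<open>covers m n x y: x covers y (so y < x), both elements of P_{m,n}.\<close>
definition covers :: "nat \<Rightarrow> nat \<Rightarrow> triple \<Rightarrow> triple \<Rightarrow> bool" where
  "covers m n x y \<longleftrightarrow> x \<in> Pmn m n \<and> y \<in> Pmn m n \<and>
     (case x of (i,j,k) \<Rightarrow>
        y = (i+1, j, k) \<or> y = (i, j+1, k) \<or>
        (1 \<le> i \<and> 1 \<le> k \<and> y = (i-1, j, k-1)) \<or>
        (1 \<le> j \<and> 1 \<le> k \<and> y = (i, j-1, k-1)))"

definition Ple :: "nat \<Rightarrow> nat \<Rightarrow> triple \<Rightarrow> triple \<Rightarrow> bool" where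
  "Ple m n y x \<longleftrightarrow> y \<in> Pmn m n \<and> x \<in> Pmn m n \<and> (\<lambda>a b. covers m n b a)\<^sup>*\<^sup>* y x"

definition order_ideals :: "nat \<Rightarrow> nat \<Rightarrow> triple set set" where
  "order_ideals m n = {X. X \<subseteq> Pmn m n \<and> (\<forall>y\<in>X. \<forall>z. Ple m n z y \<longrightarrow> z \<in> X)}"

definition is_lub_in :: "'a set set \<Rightarrow> 'a set \<Rightarrow> 'a set \<Rightarrow> 'a set \<Rightarrow> bool" where
  "is_lub_in S X Y Z \<longleftrightarrow> Z \<in> S \<and> X \<subseteq> Z \<and> Y \<subseteq> Z \<and> (\<forall>W\<in>S. X \<subseteq> W \<and> Y \<subseteq> W \<longrightarrow> Z \<subseteq> W)"

definition is_glb_in :: "'a set set \<Rightarrow> 'a set \<Rightarrow> 'a set \<Rightarrow> 'a set \<Rightarrow> bool" where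
  "is_glb_in S X Y Z \<longleftrightarrow> Z \<in> S \<and> Z \<subseteq> X \<and> Z \<subseteq> Y \<and> (\<forall>W\<in>S. W \<subseteq> X \<and> W \<subseteq> Y \<longrightarrow> W \<subseteq> Z)"

definition join_in :: "'a set set \<Rightarrow> 'a set \<Rightarrow> 'a set \<Rightarrow> 'a set" where
  "join_in S X Y = (THE Z. is_lub_in S X Y Z)"

definition meet_in :: "'a set set \<Rightarrow> 'a set \<Rightarrow> 'a set \<Rightarrow> 'a set" where
  "meet_in S X Y = (THE Z. is_glb_in S X Y Z)"

definition is_lattice_incl :: "'a set set \<Rightarrow> bool" where
  "is_lattice_incl S \<longleftrightarrow> S \<noteq> {} \<and>
     (\<forall>X\<in>S. \<forall>Y\<in>S. (\<exists>Z. is_lub_in S X Y Z) \<and> (\<exists>Z. is_glb_in S X Y Z))"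

definition is_distrib_lattice_incl :: "'a set set \<Rightarrow> bool" where
  "is_distrib_lattice_incl S \<longleftrightarrow> is_lattice_incl S \<and>
     (\<forall>X\<in>S. \<forall>Y\<in>S. \<forall>Z\<in>S.
        meet_in S X (join_in S Y Z) = join_in S (meet_in S X Y) (meet_in S X Z))"

definition is_chain_incl :: "'a set set \<Rightarrow> 'a set set \<Rightarrow> bool" where
  "is_chain_incl S C \<longleftrightarrow> C \<subseteq> S \<and> (\<forall>X\<in>C. \<forall>Y\<in>C. X \<subseteq> Y \<or> Y \<subseteq> X)"

definition is_maximal_chain_incl :: "'a set set \<Rightarrow> 'a set set \<Rightarrow> bool" where
  "is_maximal_chain_incl S C \<longleftrightarrow> is_chain_incl S C \<and>
     (\<forall>D. is_chain_incl S D \<and> C \<subseteq> D \<longrightarrow> D = C)"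

definition graded_of_rank :: "'a set set \<Rightarrow> nat \<Rightarrow> bool" where
  "graded_of_rank S r \<longleftrightarrow> finite S \<and>
     (\<forall>C. is_maximal_chain_incl S C \<longrightarrow> finite C \<and> card C = r + 1)"

end

theory Submission
  imports Defs
begin

definition fr :: "triple \<Rightarrow> int" where
  "fr t = (case t of (i,j,k) \<Rightarrow> 3 * int k - int i - int j)"

lemma covers_fr: "covers m n x y \<Longrightarrow> fr y < fr x"
  unfolding covers_def fr_def by (cases x) auto

lemma rt_fr: "(\<lambda>a b. covers m n b a)\<^sup>*\<^sup>* y x \<Longrightarrow> y = x \<or> fr y < fr x"
proof (induction rule: rtranclp_induct)
  case base then show ?case by simp
next
  case (step u v)
  then show ?case using covers_fr[of m n v u] by auto
qed

lemma Ple_fr: "Ple m n y x \<Longrightarrow> y = x \<or> fr y < fr x"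
  unfolding Ple_def using rt_fr by blast

lemma ideals_finite: "finite (order_ideals m n)"
proof -
  have "finite (Pmn m n)"
  proof -
    have "Pmn m n \<subseteq> {0..m} \<times> {0..n} \<times> {0..m}" unfolding Pmn_def by auto
    then show ?thesis by (rule finite_subset) auto
  qed
  moreover have "order_ideals m n \<subseteq> Pow (Pmn m n)" unfolding order_ideals_def by auto
  ultimately show ?thesis by (meson finite_Pow_iff finite_subset)
qed

lemma Pmn_finite: "finite (Pmn m n)"
proof -
  have "Pmn m n \<subseteq> {0..m} \<times> {0..n} \<times> {0..m}" unfolding Pmn_def by auto
  then show ?thesis by (rule finite_subset) auto
qed

lemma ideal_sub: "X \<in> order_ideals m n \<Longrightarrow> X \<subseteq> Pmn m n"
  unfolding order_ideals_def by auto

lemma empty_ideal: "{} \<in> order_ideals m n"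
  unfolding order_ideals_def by auto

lemma full_ideal: "Pmn m n \<in> order_ideals m n"
  unfolding order_ideals_def Ple_def by auto

lemma un_ideal: "X \<in> order_ideals m n \<Longrightarrow> Y \<in> order_ideals m n \<Longrightarrow> X \<union> Y \<in> order_ideals m n"
  unfolding order_ideals_def by blast

lemma int_ideal: "X \<in> order_ideals m n \<Longrightarrow> Y \<in> order_ideals m n \<Longrightarrow> X \<inter> Y \<in> order_ideals m n"
  unfolding order_ideals_def by blast

lemma join_eq: assumes X: "X \<in> order_ideals m n" and Y: "Y \<in> order_ideals m n"
  shows "join_in (order_ideals m n) X Y = X \<union> Y"
  unfolding join_in_def
proof (rule the_equality)
  have U: "X \<union> Y \<in> order_ideals m n" using un_ideal[OF X Y] .
  then show "is_lub_in (order_ideals m n) X Y (X \<union> Y)" unfolding is_lub_in_def by blast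
  fix Z assume "is_lub_in (order_ideals m n) X Y Z"
  then have "X \<subseteq> Z" "Y \<subseteq> Z" "Z \<subseteq> X \<union> Y" using U unfolding is_lub_in_def by auto
  then show "Z = X \<union> Y" by blast
qed

lemma meet_eq: assumes X: "X \<in> order_ideals m n" and Y: "Y \<in> order_ideals m n"
  shows "meet_in (order_ideals m n) X Y = X \<inter> Y"
  unfolding meet_in_def
proof (rule the_equality)
  have U: "X \<inter> Y \<in> order_ideals m n" using int_ideal[OF X Y] .
  then show "is_glb_in (order_ideals m n) X Y (X \<inter> Y)" unfolding is_glb_in_def by blast
  fix Z assume "is_glb_in (order_ideals m n) X Y Z"
  then have "Z \<subseteq> X" "Z \<subseteq> Y" "X \<inter> Y \<subseteq> Z" using U unfolding is_glb_in_def by auto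
  then show "Z = X \<inter> Y" by blast
qed

lemma distrib: "is_distrib_lattice_incl (order_ideals m n)"
proof -
  have 1: "order_ideals m n \<noteq> {}" using empty_ideal by blast
  have 2: "\<forall>X\<in>order_ideals m n. \<forall>Y\<in>order_ideals m n.
     (\<exists>Z. is_lub_in (order_ideals m n) X Y Z) \<and> (\<exists>Z. is_glb_in (order_ideals m n) X Y Z)"
  proof (intro ballI conjI)
    fix X Y assume "X \<in> order_ideals m n" "Y \<in> order_ideals m n"
    then show "\<exists>Z. is_lub_in (order_ideals m n) X Y Z" "\<exists>Z. is_glb_in (order_ideals m n) X Y Z"
      unfolding is_lub_in_def is_glb_in_def using un_ideal int_ideal by blast+
  qed
  have 3: "\<forall>X\<in>order_ideals m n. \<forall>Y\<in>order_ideals m n. \<forall>Z\<in>order_ideals m n.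
     meet_in (order_ideals m n) X (join_in (order_ideals m n) Y Z) =
     join_in (order_ideals m n) (meet_in (order_ideals m n) X Y) (meet_in (order_ideals m n) X Z)"
    by (simp add: join_eq meet_eq un_ideal int_ideal Int_Un_distrib)
  show ?thesis unfolding is_distrib_lattice_incl_def is_lattice_incl_def using 1 2 3 by blast
qed

lemma step_ideal:
  assumes X: "X \<in> order_ideals m n" and Y: "Y \<in> order_ideals m n" and XY: "X \<subset> Y"
  shows "\<exists>z. z \<in> Y - X \<and> insert z X \<in> order_ideals m n"
proof -
  have fin: "finite (Y - X)" using ideal_sub[OF Y] Pmn_finite by (meson finite_Diff finite_subset)
  have ne: "Y - X \<noteq> {}" using XY by blast
  obtain z where z: "z \<in> Y - X" and zmin: "\<And>w. w \<in> Y - X \<Longrightarrow> fr z \<le> fr w"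
  proof -
    have "Min (fr ` (Y - X)) \<in> fr ` (Y - X)" using fin ne by simp
    then obtain z where "z \<in> Y - X" "fr z = Min (fr ` (Y - X))" by force
    moreover have "\<And>w. w \<in> Y - X \<Longrightarrow> Min (fr ` (Y - X)) \<le> fr w" using fin by simp
    ultimately show ?thesis using that by metis
  qed
  have "insert z X \<in> order_ideals m n"
    unfolding order_ideals_def
  proof (intro CollectI conjI ballI allI impI)
    show "insert z X \<subseteq> Pmn m n" using z ideal_sub[OF X] ideal_sub[OF Y] by blast
  next
    fix y w assume y: "y \<in> insert z X" and w: "Ple m n w y"
    show "w \<in> insert z X"
    proof (cases "y = z")
      case True
      have "w \<in> Y" using Y w z True unfolding order_ideals_def by blast
      show ?thesis
      proof (rule ccontr)
        assume "w \<notin> insert z X"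
        then have "w \<in> Y - X" "w \<noteq> z" using \<open>w \<in> Y\<close> by auto
        then show False using zmin[of w] Ple_fr[OF w] True by auto
      qed
    next
      case False
      then have "y \<in> X" using y by auto
      then show ?thesis using X w unfolding order_ideals_def by blast
    qed
  qed
  then show ?thesis using z by blast
qed

lemma maxchain_card:
  assumes C: "is_maximal_chain_incl (order_ideals m n) C"
  shows "finite C \<and> card C = card (Pmn m n) + 1"
proof -
  let ?S = "order_ideals m n"
  let ?N = "card (Pmn m n)"
  have CS: "C \<subseteq> ?S" and ch: "\<forall>X\<in>C. \<forall>Y\<in>C. X \<subseteq> Y \<or> Y \<subseteq> X"
    using C unfolding is_maximal_chain_incl_def is_chain_incl_def by auto
  have maxl: "D = C" if "C \<subseteq> D" "D \<subseteq> ?S" "\<forall>X\<in>D. \<forall>Y\<in>D. X \<subseteq> Y \<or> Y \<subseteq> X" for D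
  proof -
    have "is_chain_incl ?S D" unfolding is_chain_incl_def using that(2,3) by blast
    then show "D = C" using C that(1) unfolding is_maximal_chain_incl_def by blast
  qed
  have finC: "finite C" using CS ideals_finite by (rule finite_subset)
  have finX: "\<And>X. X \<in> C \<Longrightarrow> finite X"
  proof -
    fix X assume "X \<in> C"
    then have "X \<subseteq> Pmn m n" using CS ideal_sub by blast
    then show "finite X" using Pmn_finite by (rule finite_subset)
  qed
  have addin: "\<And>Z. Z \<in> ?S \<Longrightarrow> (\<forall>W\<in>C. W \<subseteq> Z \<or> Z \<subseteq> W) \<Longrightarrow> Z \<in> C"
  proof -
    fix Z assume "Z \<in> ?S" "\<forall>W\<in>C. W \<subseteq> Z \<or> Z \<subseteq> W"
    then have "insert Z C = C"
    proof (intro maxl)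
      show "C \<subseteq> insert Z C" by blast
      show "insert Z C \<subseteq> ?S" using CS \<open>Z \<in> ?S\<close> by blast
      show "\<forall>X\<in>insert Z C. \<forall>Y\<in>insert Z C. X \<subseteq> Y \<or> Y \<subseteq> X"
        using ch \<open>\<forall>W\<in>C. W \<subseteq> Z \<or> Z \<subseteq> W\<close> by blast
    qed
    then show "Z \<in> C" by blast
  qed
  have e: "{} \<in> C" using addin[OF empty_ideal] by blast
  have f: "Pmn m n \<in> C" using addin[OF full_ideal] CS ideal_sub by blast
  have inj: "inj_on card C"
  proof (rule inj_onI)
    fix X Y
    assume a: "X \<in> C" "Y \<in> C" "card X = card Y"
    then have "X \<subseteq> Y \<or> Y \<subseteq> X" using ch by blast
    then show "X = Y"
    proof
      assume "X \<subseteq> Y" then show "X = Y" using card_subset_eq[OF finX[OF a(2)] _ a(3)] by simp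
    next
      assume "Y \<subseteq> X" then show "X = Y" using card_subset_eq[OF finX[OF a(1)] _ a(3)[symmetric]] by simp
    qed
  qed
  have cardle: "\<And>X. X \<in> C \<Longrightarrow> card X \<le> ?N"
  proof -
    fix X assume "X \<in> C"
    then have "X \<subseteq> Pmn m n" using CS ideal_sub by blast
    then show "card X \<le> ?N" using Pmn_finite by (rule card_mono[rotated])
  qed
  have img: "card ` C = {0..?N}"
  proof
    show "card ` C \<subseteq> {0..?N}" using cardle by auto
  next
    show "{0..?N} \<subseteq> card ` C"
    proof
      fix k assume k: "k \<in> {0..?N}"
      show "k \<in> card ` C"
      proof (rule ccontr)
        assume nk: "k \<notin> card ` C"
        let ?L = "{X \<in> C. card X < k}"
        have "card ({}::triple set) \<in> card ` C" by (rule imageI[OF e])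
        then have "k \<noteq> 0" using nk by auto
        then have Lne: "?L \<noteq> {}" using e by auto
        have finL: "finite (card ` ?L)" using finC by simp
        obtain X where X: "X \<in> C" "card X < k" and Xmax: "\<And>W. W \<in> C \<Longrightarrow> card W < k \<Longrightarrow> card W \<le> card X"
        proof -
          have "Max (card ` ?L) \<in> card ` ?L" using finL Lne by simp
          then obtain X where "X \<in> ?L" "card X = Max (card ` ?L)" by force
          moreover have "\<And>W. W \<in> ?L \<Longrightarrow> card W \<le> Max (card ` ?L)" using finL by simp
          ultimately show ?thesis using that by auto
        qed
        have "card (Pmn m n) \<noteq> k" using nk f by blast
        then have Pk: "card (Pmn m n) > k" using k by simp
        let ?U = "{X \<in> C. card X > k}"
        have Une: "?U \<noteq> {}" using f Pk by blast
        have finU: "finite (card ` ?U)" using finC by simp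
        obtain Y where Y: "Y \<in> C" "card Y > k" and Ymin: "\<And>W. W \<in> C \<Longrightarrow> card W > k \<Longrightarrow> card Y \<le> card W"
        proof -
          have "Min (card ` ?U) \<in> card ` ?U" using finU Une by simp
          then obtain Y where "Y \<in> ?U" "card Y = Min (card ` ?U)" by force
          moreover have "\<And>W. W \<in> ?U \<Longrightarrow> Min (card ` ?U) \<le> card W" using finU by simp
          ultimately show ?thesis using that by auto
        qed
        have XY: "X \<subset> Y"
        proof -
          have "\<not> Y \<subseteq> X"
          proof
            assume "Y \<subseteq> X"
            then have "card Y \<le> card X" using finX[OF X(1)] by (rule card_mono[rotated])
            then show False using X Y by simp
          qed
          then show ?thesis using ch X Y by blast
        qed
        obtain z where z: "z \<in> Y - X" and zi: "insert z X \<in> ?S"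
          using step_ideal[OF _ _ XY] X Y CS by blast
        have comp: "\<forall>W\<in>C. W \<subseteq> insert z X \<or> insert z X \<subseteq> W"
        proof
          fix W assume W: "W \<in> C"
          show "W \<subseteq> insert z X \<or> insert z X \<subseteq> W"
          proof (cases "W \<subseteq> X")
            case True then show ?thesis by blast
          next
            case False
            then have XW: "X \<subset> W" using ch W X by blast
            then have "card X < card W" using finX[OF W] by (rule psubset_card_mono[rotated])
            moreover have "card W \<noteq> k" using nk W by blast
            ultimately have "card W > k" using Xmax[OF W] by fastforce
            then have "card Y \<le> card W" using Ymin W by blast
            have "Y \<subseteq> W"
            proof (rule ccontr)
              assume "\<not> Y \<subseteq> W"
              then have "W \<subset> Y" using ch W Y by blast
              then have "card W < card Y" using finX[OF Y(1)] by (rule psubset_card_mono[rotated])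
              then show False using \<open>card Y \<le> card W\<close> by simp
            qed
            then show ?thesis using XW z by blast
          qed
        qed
        have inC: "insert z X \<in> C" using addin[OF zi comp] .
        have "card (insert z X) = card X + 1" using z finX[OF X(1)] by simp
        moreover have "card (insert z X) \<noteq> k" using nk inC by blast
        ultimately show False using Xmax[OF inC] X(2) by fastforce
      qed
    qed
  qed
  have "card C = card (card ` C)" using inj card_image by (metis sym)
  then show ?thesis using img finC by simp
qed

lemma sum_closed: "6 * int (\<Sum>i<a. (i+1)*(d+i+1)) =
   - ((int a)^3) + 3 * (int a)^2 * int (a+d) + 3 * int a * int (a+d) + int a"
proof (induction a)
  case 0 then show ?case by simp
next
  case (Suc a)
  have e: "(\<Sum>i<Suc a. (i+1)*(d+i+1)) = (\<Sum>i<a. (i+1)*(d+i+1)) + (a+1)*(d+a+1)" by simp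
  have "6 * int (\<Sum>i<Suc a. (i+1)*(d+i+1)) = 6 * int (\<Sum>i<a. (i+1)*(d+i+1)) + 6 * (int a+1)*(int d + int a+1)"
    unfolding e of_nat_add of_nat_mult by (simp add: algebra_simps)
  also have "\<dots> = - ((int (Suc a))^3) + 3 * (int (Suc a))^2 * int (Suc a+d) + 3 * int (Suc a) * int (Suc a+d) + int (Suc a)"
    unfolding Suc.IH by (simp add: algebra_simps power3_eq_cube power2_eq_square)
  finally show ?case .
qed

lemma sum_ab: assumes "a \<le> b"
  shows "6 * int (\<Sum>k<a. (a-k)*(b-k)) = - ((int a)^3) + 3 * (int a)^2 * int b + 3 * int a * int b + int a"
proof -
  obtain d where b: "b = a + d" using assms le_Suc_ex by blast
  have "(\<Sum>k<a. (a-k)*(a+d-k)) = (\<Sum>i<a. (a-(a - Suc i))*(a+d-(a - Suc i)))"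
    by (rule sum.nat_diff_reindex[symmetric])
  also have "\<dots> = (\<Sum>i<a. (i+1)*(d+i+1))"
    by (rule sum.cong) auto
  finally have eq: "(\<Sum>k<a. (a-k)*(a+d-k)) = (\<Sum>i<a. (i+1)*(d+i+1))" .
  show ?thesis unfolding b eq by (rule sum_closed)
qed

lemma card_Pmn: assumes "0 < m" "0 < n"
  shows "card (Pmn m n) = (\<Sum>k<min m n. (m-k)*(n-k))"
proof -
  let ?h = "\<lambda>(k::nat,(i::nat,j::nat)). (i,j,k)"
  let ?A = "SIGMA k:{..<min m n}. {k..m-1} \<times> {k..n-1}"
  have "Pmn m n = ?h ` ?A"
  proof
    show "Pmn m n \<subseteq> ?h ` ?A"
    proof
      fix t assume "t \<in> Pmn m n"
      then obtain i j k where t: "t = (i,j,k)" "k \<le> m-1" "k \<le> j" "j \<le> n-1" "k \<le> i" "i \<le> m-1"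
        unfolding Pmn_def by auto
      then have "(k,(i,j)) \<in> ?A" using assms by auto
      then show "t \<in> ?h ` ?A" using t(1) by force
    qed
  next
    show "?h ` ?A \<subseteq> Pmn m n" unfolding Pmn_def by auto
  qed
  moreover have "inj_on ?h ?A" by (auto simp: inj_on_def)
  ultimately have "card (Pmn m n) = card ?A" by (simp add: card_image)
  also have "\<dots> = (\<Sum>k<min m n. card ({k..m-1} \<times> {k..n-1}))" by (simp add: card_SigmaI)
  also have "\<dots> = (\<Sum>k<min m n. (m-k)*(n-k))"
    by (rule sum.cong) (auto simp: card_cartesian_product)
  finally show ?thesis .
qed

theorem corollary3p18:
  fixes m n :: nat
  assumes "0 < m" and "0 < n"
  defines "a \<equiv> min m n" and "b \<equiv> max m n"
  shows "is_distrib_lattice_incl (order_ideals m n) \<and>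
         (\<exists>r::nat. 6 * int r = - ((int a)^3) + 3 * (int a)^2 * int b + 3 * int a * int b + int a
                  \<and> graded_of_rank (order_ideals m n) r)"
proof -
  have c: "card (Pmn m n) = (\<Sum>k<a. (a-k)*(b-k))"
  proof (cases "m \<le> n")
    case True
    then show ?thesis unfolding a_def b_def using card_Pmn[OF assms(1,2)] by simp
  next
    case False
    then show ?thesis unfolding a_def b_def using card_Pmn[OF assms(1,2)] by (simp add: mult.commute)
  qed
  have ab: "a \<le> b" unfolding a_def b_def by simp
  have r: "6 * int (card (Pmn m n)) = - ((int a)^3) + 3 * (int a)^2 * int b + 3 * int a * int b + int a"
    unfolding c by (rule sum_ab[OF ab])
  have g: "graded_of_rank (order_ideals m n) (card (Pmn m n))"
    unfolding graded_of_rank_def by (simp add: ideals_finite maxchain_card)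
  show ?thesis
  proof (intro conjI exI)
    show "is_distrib_lattice_incl (order_ideals m n)" by (rule distrib)
    show "6 * int (card (Pmn m n)) = - ((int a)^3) + 3 * (int a)^2 * int b + 3 * int a * int b + int a" by (rule r)
    show "graded_of_rank (order_ideals m n) (card (Pmn m n))" by (rule g)
  qed
qed

end
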